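(* For every $n\ge 1$, $M^{\Box}_n = K^{\Box}_n = P^{\Box}_n$; in fact, a water/land coloring of the $1\times n$ fundamental domain satisfies (N1) and (N2$\Box$) on the Möbius strip iff it does so on the Klein bottle iff it does so on the projective plane.
   Context: Colorings. Each square is colored water or land. Two distinct squares are adjacent if they share an edge after all edge identifications; a set of squares is connected if its induced adjacency graph is connected (empty set counts as connected). (N1): the water is connected. For an interior (non-boundary) vertex $v$, its square-degree is the number of distinct squares having $v$ as a corner. (N2$\Box$): no interior vertex of square-degree $4$ has all incident squares water. Tile $[0,n]\times[0,1]$ by unit squares $[j-1,j]\times[0,1]$, called square $j$. The $1\times n$ Möbius strip identifies $(x,1)\sim(n-x,0)$ for $x\in[0,n]$; its boundary is the image of the vertical sides. The $1\times n$ Klein bottle additionally identifies $(0,y)\sim(n,y)$; the $1\times n$ projective plane additionally identifies $(0,y)\sim(n,1-y)$. $M^\Box_n$, $K^\Box_n$, $P^\Box_n$ are the numbers of colorings satisfying (N1) and (N2$\Box$) on the Möbius strip, Klein bottle, projective plane respectively. *)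

theory Defs
  imports Main "HOL.Real"
begin

text \<open>Points of the fundamental domain [0,n] x [0,1] are pairs of reals.
  A surface is given by a generating relation G of point identifications;
  points are identified by the equivalence closure of G.\<close>

type_synonym pt = "real \<times> real"

definition fdom :: "nat \<Rightarrow> pt set" where
  "fdom n = {(x, y). 0 \<le> x \<and> x \<le> real n \<and> 0 \<le> y \<and> y \<le> 1}"

definition mob_gen :: "nat \<Rightarrow> pt \<Rightarrow> pt \<Rightarrow> bool" where
  "mob_gen n p q \<longleftrightarrow> p \<in> fdom n \<and> q \<in> fdom n \<and> snd p = 1 \<and> q = (real n - fst p, 0)"

definition klein_gen :: "nat \<Rightarrow> pt \<Rightarrow> pt \<Rightarrow> bool" where
  "klein_gen n p q \<longleftrightarrow> mob_gen n p q \<or>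
     (p \<in> fdom n \<and> q \<in> fdom n \<and> fst p = 0 \<and> q = (real n, snd p))"

definition proj_gen :: "nat \<Rightarrow> pt \<Rightarrow> pt \<Rightarrow> bool" where
  "proj_gen n p q \<longleftrightarrow> mob_gen n p q \<or>
     (p \<in> fdom n \<and> q \<in> fdom n \<and> fst p = 0 \<and> q = (real n, 1 - snd p))"

definition ident :: "(pt \<Rightarrow> pt \<Rightarrow> bool) \<Rightarrow> pt \<Rightarrow> pt \<Rightarrow> bool" where
  "ident G = (\<lambda>p q. G p q \<or> G q p)\<^sup>*\<^sup>*"

definition cls :: "(pt \<Rightarrow> pt \<Rightarrow> bool) \<Rightarrow> pt \<Rightarrow> pt set" where
  "cls G p = {q. ident G p q}"

definition sq_edges :: "nat \<Rightarrow> pt set set" where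
  "sq_edges j =
     { {(x, 0) | x. real j - 1 \<le> x \<and> x \<le> real j},
       {(x, 1) | x. real j - 1 \<le> x \<and> x \<le> real j},
       {(real j - 1, y) | y. 0 \<le> y \<and> y \<le> 1},
       {(real j, y) | y. 0 \<le> y \<and> y \<le> 1} }"

definition sq_corners :: "nat \<Rightarrow> pt set" where
  "sq_corners j = {(real j - 1, 0), (real j, 0), (real j - 1, 1), (real j, 1)}"

text \<open>Two distinct squares are adjacent if they share an edge after identification,
  i.e. some edge of one and some edge of the other have the same image in the quotient.\<close>
definition adjacent :: "(pt \<Rightarrow> pt \<Rightarrow> bool) \<Rightarrow> nat \<Rightarrow> nat \<Rightarrow> nat \<Rightarrow> bool" where
  "adjacent G n i j \<longleftrightarrow> i \<noteq> j \<and> i \<in> {1..n} \<and> j \<in> {1..n} \<and>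
     (\<exists>e\<in>sq_edges i. \<exists>f\<in>sq_edges j. cls G ` e = cls G ` f)"

definition vertices :: "(pt \<Rightarrow> pt \<Rightarrow> bool) \<Rightarrow> nat \<Rightarrow> pt set set" where
  "vertices G n = {cls G c | c j. j \<in> {1..n} \<and> c \<in> sq_corners j}"

definition has_corner :: "(pt \<Rightarrow> pt \<Rightarrow> bool) \<Rightarrow> pt set \<Rightarrow> nat \<Rightarrow> bool" where
  "has_corner G v j \<longleftrightarrow> (\<exists>c\<in>sq_corners j. cls G c = v)"

definition sq_degree :: "(pt \<Rightarrow> pt \<Rightarrow> bool) \<Rightarrow> nat \<Rightarrow> pt set \<Rightarrow> nat" where
  "sq_degree G n v = card {j \<in> {1..n}. has_corner G v j}"

text \<open>Boundary point sets: image of the vertical sides for the Moebius strip; empty otherwise.\<close>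
definition mob_boundary :: "nat \<Rightarrow> pt set" where
  "mob_boundary n = {p \<in> fdom n. fst p = 0 \<or> fst p = real n}"

definition N1 :: "(pt \<Rightarrow> pt \<Rightarrow> bool) \<Rightarrow> nat \<Rightarrow> nat set \<Rightarrow> bool" where
  "N1 G n W \<longleftrightarrow> (\<forall>i\<in>W. \<forall>j\<in>W. (\<lambda>a b. a \<in> W \<and> b \<in> W \<and> adjacent G n a b)\<^sup>*\<^sup>* i j)"

text \<open>(N2box): no interior vertex of square-degree 4 has all incident squares water.
  A vertex is interior iff its class contains no boundary point.\<close>
definition N2box :: "(pt \<Rightarrow> pt \<Rightarrow> bool) \<Rightarrow> pt set \<Rightarrow> nat \<Rightarrow> nat set \<Rightarrow> bool" where
  "N2box G B n W \<longleftrightarrow> (\<forall>v\<in>vertices G n. v \<inter> B = {} \<and> sq_degree G n v = 4 \<longrightarrow>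
       \<not> (\<forall>j\<in>{1..n}. has_corner G v j \<longrightarrow> j \<in> W))"

definition valid :: "(pt \<Rightarrow> pt \<Rightarrow> bool) \<Rightarrow> pt set \<Rightarrow> nat \<Rightarrow> nat set \<Rightarrow> bool" where
  "valid G B n W \<longleftrightarrow> W \<subseteq> {1..n} \<and> N1 G n W \<and> N2box G B n W"

definition valid_M :: "nat \<Rightarrow> nat set \<Rightarrow> bool" where
  "valid_M n W = valid (mob_gen n) (mob_boundary n) n W"
definition valid_K :: "nat \<Rightarrow> nat set \<Rightarrow> bool" where
  "valid_K n W = valid (klein_gen n) {} n W"
definition valid_P :: "nat \<Rightarrow> nat set \<Rightarrow> bool" where
  "valid_P n W = valid (proj_gen n) {} n W"

text \<open>Colorings are identified with their set of water squares W \<subseteq> {1..n}.\<close>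
definition M_box :: "nat \<Rightarrow> nat" where "M_box n = card {W. valid_M n W}"
definition K_box :: "nat \<Rightarrow> nat" where "K_box n = card {W. valid_K n W}"
definition P_box :: "nat \<Rightarrow> nat" where "P_box n = card {W. valid_P n W}"

end

theory Submission
  imports Defs
begin


lemma ident_refl: "ident G p p" by (simp add: ident_def)
lemma ident_gen: "G p q \<Longrightarrow> ident G p q" by (simp add: ident_def r_into_rtranclp)
lemma ident_gen': "G q p \<Longrightarrow> ident G p q" by (simp add: ident_def r_into_rtranclp)
lemma ident_trans: "ident G p q \<Longrightarrow> ident G q r \<Longrightarrow> ident G p r"
  unfolding ident_def by (rule rtranclp_trans)
lemma ident_sym: "ident G p q \<Longrightarrow> ident G q p"
  unfolding ident_def
proof (induction rule: rtranclp_induct)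
  case base then show ?case by simp
next
  case (step y z)
  then have "(\<lambda>p q. G p q \<or> G q p) z y" by auto
  then show ?case using step(3) by (rule converse_rtranclp_into_rtranclp)
qed

lemma ident_phi:
  assumes resp: "\<And>p q. G p q \<Longrightarrow> \<phi> p = \<phi> q" and to: "\<And>p. ident G p (\<phi> p)"
  shows "ident G p q \<longleftrightarrow> \<phi> p = \<phi> q"
proof
  assume "ident G p q" then show "\<phi> p = \<phi> q"
    unfolding ident_def
    by (induction rule: rtranclp_induct) (auto dest: resp)
next
  assume e: "\<phi> p = \<phi> q"
  have "ident G p (\<phi> p)" by (rule to)
  moreover have "ident G (\<phi> q) q" by (rule ident_sym[OF to])
  ultimately show "ident G p q" using e by (metis ident_trans)
qed

lemma cls_phi:
  assumes resp: "\<And>p q. G p q \<Longrightarrow> \<phi> p = \<phi> q" and to: "\<And>p. ident G p (\<phi> p)"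
  shows "cls G p = {q. \<phi> q = \<phi> p}"
proof -
  have "\<And>q. ident G p q \<longleftrightarrow> \<phi> q = \<phi> p" using ident_phi[OF resp to] by metis
  then show ?thesis unfolding cls_def by blast
qed

lemma img_phi:
  assumes resp: "\<And>p q. G p q \<Longrightarrow> \<phi> p = \<phi> q" and to: "\<And>p. ident G p (\<phi> p)"
  shows "cls G ` e = cls G ` f \<longleftrightarrow> \<phi> ` e = \<phi> ` f"
proof -
  define g where "g = (\<lambda>v. {q. \<phi> q = v})"
  have c: "cls G = g \<circ> \<phi>" using cls_phi[OF resp to] unfolding g_def by (auto simp: fun_eq_iff)
  have inj: "inj_on g (range \<phi>)" unfolding g_def inj_on_def by auto
  show ?thesis unfolding c image_comp[symmetric]
    by (rule inj_on_image_eq_iff[OF inj]) auto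
qed

lemma cls_eq_phi:
  assumes resp: "\<And>p q. G p q \<Longrightarrow> \<phi> p = \<phi> q" and to: "\<And>p. ident G p (\<phi> p)"
  shows "cls G p = cls G q \<longleftrightarrow> \<phi> p = \<phi> q"
  using cls_phi[OF resp to] by auto

definition phiM :: "nat \<Rightarrow> pt \<Rightarrow> pt" where
  "phiM n p = (if p \<in> fdom n \<and> snd p = 1 then (real n - fst p, 0) else p)"
definition phiK :: "nat \<Rightarrow> pt \<Rightarrow> pt" where
  "phiK n p = (if p \<notin> fdom n then p
     else if (fst p = 0 \<or> fst p = real n) \<and> (snd p = 0 \<or> snd p = 1) then (0,0)
     else if fst p = real n then (0, snd p)
     else if snd p = 1 then (real n - fst p, 0) else p)"
definition phiP :: "nat \<Rightarrow> pt \<Rightarrow> pt" where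
  "phiP n p = (if p \<notin> fdom n then p
     else if fst p = real n then (0, 1 - snd p)
     else if snd p = 1 \<and> fst p \<noteq> 0 then (real n - fst p, 0) else p)"

lemma respM: "mob_gen n p q \<Longrightarrow> phiM n p = phiM n q"
  by (auto simp: mob_gen_def phiM_def fdom_def)
lemma respK: "n \<ge> 1 \<Longrightarrow> klein_gen n p q \<Longrightarrow> phiK n p = phiK n q"
  by (auto simp: klein_gen_def mob_gen_def phiK_def fdom_def)
lemma respP: "n \<ge> 1 \<Longrightarrow> proj_gen n p q \<Longrightarrow> phiP n p = phiP n q"
  by (auto simp: proj_gen_def mob_gen_def phiP_def fdom_def)

lemma toM: "ident (mob_gen n) p (phiM n p)"
proof (cases "p \<in> fdom n \<and> snd p = 1")
  case True
  then have "mob_gen n p (phiM n p)" by (auto simp: mob_gen_def phiM_def fdom_def)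
  then show ?thesis by (rule ident_gen)
next
  case False then show ?thesis by (auto simp: phiM_def ident_refl)
qed

lemma toK: assumes n1: "n \<ge> 1" shows "ident (klein_gen n) p (phiK n p)"
proof -
  obtain a b where p: "p = (a,b)" by force
  have n0: "(0::real) \<le> real n" by simp
  have m1: "klein_gen n (real n, 1) (0,0)" and m2: "klein_gen n (0,1) (real n, 0)"
    and m3: "klein_gen n (0,0) (real n, 0)"
    by (auto simp: klein_gen_def mob_gen_def fdom_def)
  have m4: "ident (klein_gen n) (0,1) (0,0)" using ident_gen[of "klein_gen n", OF m2] ident_gen'[of "klein_gen n", OF m3] by (rule ident_trans)
  show ?thesis
  proof (cases "p \<in> fdom n")
    case False then show ?thesis by (simp add: phiK_def ident_refl)
  next
    case T: True
    show ?thesis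
    proof (cases "(a = 0 \<or> a = real n) \<and> (b = 0 \<or> b = 1)")
      case True
      then have "phiK n p = (0,0)" using T p by (simp add: phiK_def)
      moreover have "ident (klein_gen n) (a,b) (0,0)"
        using True ident_gen[of "klein_gen n", OF m1] m4 ident_refl ident_gen'[of "klein_gen n", OF m3] by auto
      ultimately show ?thesis using p by simp
    next
      case F1: False
      show ?thesis
      proof (cases "a = real n")
        case True
        then have "phiK n p = (0,b)" using T p F1 by (simp add: phiK_def)
        moreover have "klein_gen n (0,b) (a,b)" using T p True by (auto simp: klein_gen_def fdom_def)
        ultimately show ?thesis using p by (simp add: ident_gen')
      next
        case F2: False
        show ?thesis
        proof (cases "b = 1")
          case True
          then have "phiK n p = (real n - a, 0)" using T p F1 F2 by (simp add: phiK_def)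
          moreover have "klein_gen n (a,b) (real n - a, 0)" using T p True by (auto simp: klein_gen_def mob_gen_def fdom_def)
          ultimately show ?thesis using p by (simp add: ident_gen)
        next
          case False
          then have "phiK n p = p" using T p F1 F2 by (simp add: phiK_def)
          then show ?thesis by (simp add: ident_refl)
        qed
      qed
    qed
  qed
qed

lemma toP: assumes n1: "n \<ge> 1" shows "ident (proj_gen n) p (phiP n p)"
proof -
  obtain a b where p: "p = (a,b)" by force
  show ?thesis
  proof (cases "p \<in> fdom n")
    case False then show ?thesis by (simp add: phiP_def ident_refl)
  next
    case T: True
    show ?thesis
    proof (cases "a = real n")
      case True
      then have "phiP n p = (0,1-b)" using T p by (simp add: phiP_def)
      moreover have "proj_gen n (0,1-b) (a,b)" using T p True by (auto simp: proj_gen_def fdom_def)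
      ultimately show ?thesis using p by (simp add: ident_gen')
    next
      case F2: False
      show ?thesis
      proof (cases "b = 1 \<and> a \<noteq> 0")
        case True
        then have "phiP n p = (real n - a, 0)" using T p F2 by (simp add: phiP_def)
        moreover have "proj_gen n (a,b) (real n - a, 0)" using T p True by (auto simp: proj_gen_def mob_gen_def fdom_def)
        ultimately show ?thesis using p by (simp add: ident_gen)
      next
        case False
        then have "phiP n p = p" using T p F2 by (auto simp: phiP_def)
        then show ?thesis by (simp add: ident_refl)
      qed
    qed
  qed
qed

definition edgeB :: "nat \<Rightarrow> pt set" where
  "edgeB k = {(x, 0) | x. real k - 1 \<le> x \<and> x \<le> real k}"
definition edgeT :: "nat \<Rightarrow> pt set" where
  "edgeT k = {(x, 1) | x. real k - 1 \<le> x \<and> x \<le> real k}"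
definition edgeV :: "nat \<Rightarrow> pt set" where
  "edgeV m = {(real m, y) | y. 0 \<le> y \<and> y \<le> 1}"

lemma sq_edges_eq: "j \<ge> 1 \<Longrightarrow> sq_edges j = {edgeB j, edgeT j, edgeV (j-1), edgeV j}"
  by (simp add: sq_edges_def edgeB_def edgeT_def edgeV_def of_nat_diff)

lemma top_gen:
  assumes resp: "\<And>p q. G p q \<Longrightarrow> \<phi> p = \<phi> q" and mg: "\<And>p q. mob_gen n p q \<Longrightarrow> G p q"
    and j: "j \<in> {1..n}"
  shows "\<phi> ` edgeT j = \<phi> ` edgeB (n+1-j)"
proof -
  have r: "real (n+1-j) = real n + 1 - real j" using j by (simp add: of_nat_diff)
  have jn: "real j \<le> real n" "1 \<le> real j" using j by auto
  show ?thesis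
  proof (intro equalityI subsetI)
    fix z assume "z \<in> \<phi> ` edgeT j"
    then obtain x where x: "real j - 1 \<le> x" "x \<le> real j" and z: "z = \<phi> (x,1)"
      by (auto simp: edgeT_def)
    have "mob_gen n (x,1) (real n - x, 0)" using x jn by (auto simp: mob_gen_def fdom_def)
    then have "\<phi> (x,1) = \<phi> (real n - x, 0)" by (intro resp mg)
    moreover have "(real n - x, 0) \<in> edgeB (n+1-j)" using x r by (auto simp: edgeB_def)
    ultimately show "z \<in> \<phi> ` edgeB (n+1-j)" using z by auto
  next
    fix z assume "z \<in> \<phi> ` edgeB (n+1-j)"
    then obtain x where x: "real n - real j \<le> x" "x \<le> real n + 1 - real j" and z: "z = \<phi> (x,0)"
      using r by (auto simp: edgeB_def)
    have "mob_gen n (real n - x, 1) (x, 0)" using x jn by (auto simp: mob_gen_def fdom_def)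
    then have "\<phi> (real n - x, 1) = \<phi> (x, 0)" by (intro resp mg)
    moreover have "(real n - x, 1) \<in> edgeT j" using x by (auto simp: edgeT_def)
    ultimately show "z \<in> \<phi> ` edgeT j" using z by (metis image_eqI)
  qed
qed

lemma int_lemma:
  fixes k k' :: nat
  assumes "real k' - 1 \<le> real k - 1/2" "real k - 1/2 \<le> real k'"
  shows "k = k'"
proof -
  have "k' \<le> k"
  proof (rule ccontr)
    assume "\<not> k' \<le> k"
    then have "k + 1 \<le> k'" by simp
    then have "real (k+1) \<le> real k'" by (simp only: of_nat_le_iff)
    then show False using assms by simp
  qed
  moreover have "k \<le> k'"
  proof (rule ccontr)
    assume "\<not> k \<le> k'"
    then have "k' + 1 \<le> k" by simp
    then have "real (k'+1) \<le> real k" by (simp only: of_nat_le_iff)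
    then show False using assms by simp
  qed
  ultimately show ?thesis by simp
qed

lemma hinj_gen:
  assumes P1: "\<And>k. k \<in> {1..n} \<Longrightarrow> \<phi> (real k - 1/2, 0) = (real k - 1/2, 0)"
    and P2: "\<And>x z. 0 \<le> x \<Longrightarrow> x \<le> real n \<Longrightarrow> 0 < z \<Longrightarrow> \<phi> (x,0) = (z,0) \<Longrightarrow> x = z"
    and k: "k \<in> {1..n}" and k': "k' \<in> {1..n}" and eq: "\<phi> ` edgeB k = \<phi> ` edgeB k'"
  shows "k = k'"
proof -
  have "(real k - 1/2, 0) \<in> edgeB k" by (auto simp: edgeB_def)
  then have "\<phi> (real k - 1/2, 0) \<in> \<phi> ` edgeB k'" using eq by blast
  then obtain x where x: "real k' - 1 \<le> x" "x \<le> real k'" and e: "\<phi> (x,0) = (real k - 1/2, 0)"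
    using P1[OF k] by (auto simp: edgeB_def)
  have "x = real k - 1/2"
    apply (rule P2[OF _ _ _ e]) using x k k' by auto
  then show ?thesis using x int_lemma by blast
qed

lemma hv_gen:
  assumes P3: "\<And>x. snd (\<phi> (x,0)) \<noteq> 1/2"
    and P4: "\<And>m. m \<le> n \<Longrightarrow> snd (\<phi> (real m, 1/2)) = 1/2"
    and m: "m \<le> n"
  shows "\<phi> ` edgeB k \<noteq> \<phi> ` edgeV m"
proof
  assume eq: "\<phi> ` edgeB k = \<phi> ` edgeV m"
  have "(real m, 1/2) \<in> edgeV m" unfolding edgeV_def by (rule CollectI, rule exI[of _ "1/2"]) auto
  then have "\<phi> (real m, 1/2) \<in> \<phi> ` edgeB k" using eq by blast
  then obtain x where "\<phi> (real m, 1/2) = \<phi> (x,0)" by (auto simp: edgeB_def)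
  then show False using P3[of x] P4[OF m] by simp
qed

lemma vinj_gen:
  assumes P5: "\<And>m m' y. m \<le> n \<Longrightarrow> m' \<le> n \<Longrightarrow> 0 \<le> y \<Longrightarrow> y \<le> 1 \<Longrightarrow>
        \<phi> (real m', y) = \<phi> (real m, 1/2) \<Longrightarrow> m = m' \<or> (m = 0 \<and> m' = n) \<or> (m = n \<and> m' = 0)"
    and m: "m \<le> n" and m': "m' \<le> n" and eq: "\<phi> ` edgeV m = \<phi> ` edgeV m'"
  shows "m = m' \<or> (m = 0 \<and> m' = n) \<or> (m = n \<and> m' = 0)"
proof -
  have "(real m, 1/2) \<in> edgeV m" unfolding edgeV_def by (rule CollectI, rule exI[of _ "1/2"]) auto
  then have "\<phi> (real m, 1/2) \<in> \<phi> ` edgeV m'" using eq by blast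
  then obtain y where "0 \<le> y" "y \<le> 1" "\<phi> (real m', y) = \<phi> (real m, 1/2)" by (auto simp: edgeV_def)
  then show ?thesis using P5 m m' by blast
qed

lemma adj_gen:
  assumes n1: "n \<ge> 1"
    and img: "\<And>e f. cls G ` e = cls G ` f \<longleftrightarrow> \<phi> ` e = \<phi> ` f"
    and top: "\<And>j. j \<in> {1..n} \<Longrightarrow> \<phi> ` edgeT j = \<phi> ` edgeB (n+1-j)"
    and hinj: "\<And>k k'. k \<in> {1..n} \<Longrightarrow> k' \<in> {1..n} \<Longrightarrow> \<phi> ` edgeB k = \<phi> ` edgeB k' \<Longrightarrow> k = k'"
    and hv: "\<And>k m. k \<in> {1..n} \<Longrightarrow> m \<le> n \<Longrightarrow> \<phi> ` edgeB k \<noteq> \<phi> ` edgeV m"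
    and vinj: "\<And>m m'. m \<le> n \<Longrightarrow> m' \<le> n \<Longrightarrow> \<phi> ` edgeV m = \<phi> ` edgeV m' \<Longrightarrow>
                 m = m' \<or> (m = 0 \<and> m' = n) \<or> (m = n \<and> m' = 0)"
  shows "adjacent G n i j \<longleftrightarrow> i \<noteq> j \<and> i \<in> {1..n} \<and> j \<in> {1..n} \<and> (j = i+1 \<or> i = j+1 \<or> i+j = n+1)"
proof
  assume adj: "adjacent G n i j"
  then have ij: "i \<noteq> j" "i \<in> {1..n}" "j \<in> {1..n}" by (auto simp: adjacent_def)
  from adj obtain e f where e: "e \<in> sq_edges i" and f: "f \<in> sq_edges j" and ef: "\<phi> ` e = \<phi> ` f"
    by (auto simp: adjacent_def img)
  have lab: "\<And>i e. i \<in> {1..n} \<Longrightarrow> e \<in> sq_edges i \<Longrightarrow>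
     (\<exists>a\<in>{1..n}. \<phi> ` e = \<phi> ` edgeB a \<and> (a = i \<or> a = n+1-i)) \<or>
     (\<exists>m\<le>n. \<phi> ` e = \<phi> ` edgeV m \<and> (m+1 = i \<or> m = i))"
  proof -
    fix i e assume i: "i \<in> {1..n}" and e: "e \<in> sq_edges i"
    then have "e = edgeB i \<or> e = edgeT i \<or> e = edgeV (i-1) \<or> e = edgeV i" using sq_edges_eq[of i] by auto
    then show "?thesis i e"
    proof (elim disjE)
      assume "e = edgeT i" then show ?thesis using top[OF i] i by (intro disjI1 bexI[of _ "n+1-i"]) auto
    next
      assume "e = edgeV (i-1)" then show ?thesis using i by (intro disjI2 exI[of _ "i-1"]) auto
    qed (use i in auto)
  qed
  show "i \<noteq> j \<and> i \<in> {1..n} \<and> j \<in> {1..n} \<and> (j = i+1 \<or> i = j+1 \<or> i+j = n+1)"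
  proof -
    have le: "(\<exists>a\<in>{1..n}. \<phi> ` e = \<phi> ` edgeB a \<and> (a = i \<or> a = n+1-i)) \<or>
     (\<exists>m\<le>n. \<phi> ` e = \<phi> ` edgeV m \<and> (m+1 = i \<or> m = i))" by (rule lab[OF ij(2) e])
    have lf: "(\<exists>a\<in>{1..n}. \<phi> ` f = \<phi> ` edgeB a \<and> (a = j \<or> a = n+1-j)) \<or>
     (\<exists>m\<le>n. \<phi> ` f = \<phi> ` edgeV m \<and> (m+1 = j \<or> m = j))" by (rule lab[OF ij(3) f])
    have "j = i+1 \<or> i = j+1 \<or> i+j = n+1"
    proof (cases "\<exists>a\<in>{1..n}. \<phi> ` e = \<phi> ` edgeB a \<and> (a = i \<or> a = n+1-i)")
      case True
      then obtain a where a: "a \<in> {1..n}" "\<phi> ` e = \<phi> ` edgeB a" "a = i \<or> a = n + 1 - i" by blast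
      show ?thesis
      proof (cases "\<exists>b\<in>{1..n}. \<phi> ` f = \<phi> ` edgeB b \<and> (b = j \<or> b = n+1-j)")
        case True
        then obtain b where b: "b \<in> {1..n}" "\<phi> ` f = \<phi> ` edgeB b" "b = j \<or> b = n + 1 - j" by blast
        then have "a = b" using hinj ef a by metis
        then show ?thesis using a b ij by auto
      next
        case False
        then obtain m where "m \<le> n" "\<phi> ` f = \<phi> ` edgeV m" using lf by blast
        then show ?thesis using hv ef a by metis
      qed
    next
      case False
      then obtain m where m: "m \<le> n" "\<phi> ` e = \<phi> ` edgeV m" "m + 1 = i \<or> m = i" using le by blast
      show ?thesis
      proof (cases "\<exists>b\<in>{1..n}. \<phi> ` f = \<phi> ` edgeB b \<and> (b = j \<or> b = n+1-j)")
        case True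
        then obtain b where b: "b \<in> {1..n}" "\<phi> ` f = \<phi> ` edgeB b" by blast
        then show ?thesis using hv ef m by metis
      next
        case False
        then obtain m' where m': "m' \<le> n" "\<phi> ` f = \<phi> ` edgeV m'" "m' + 1 = j \<or> m' = j" using lf by blast
        then have "m = m' \<or> (m = 0 \<and> m' = n) \<or> (m = n \<and> m' = 0)" using vinj ef m by metis
        then show ?thesis using m m' ij by auto
      qed
    qed
    then show ?thesis using ij by blast
  qed
next
  assume h: "i \<noteq> j \<and> i \<in> {1..n} \<and> j \<in> {1..n} \<and> (j = i+1 \<or> i = j+1 \<or> i+j = n+1)"
  then have i: "i \<in> {1..n}" and j: "j \<in> {1..n}" by auto
  have ei: "sq_edges i = {edgeB i, edgeT i, edgeV (i-1), edgeV i}" using i sq_edges_eq by auto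
  have ej: "sq_edges j = {edgeB j, edgeT j, edgeV (j-1), edgeV j}" using j sq_edges_eq by auto
  have "\<exists>e\<in>sq_edges i. \<exists>f\<in>sq_edges j. \<phi> ` e = \<phi> ` f"
  proof -
    { assume "j = i+1" then have ?thesis unfolding ei ej by auto }
    moreover { assume "i = j+1" then have ?thesis unfolding ei ej by auto }
    moreover { assume "i+j = n+1" then have "n+1-i = j" by auto
      then have ?thesis using top[OF i] unfolding ei ej by auto }
    ultimately show ?thesis using h by blast
  qed
  then show "adjacent G n i j" using h by (auto simp: adjacent_def img)
qed

lemma P1M: "n \<ge> 1 \<Longrightarrow> k \<in> {1..n} \<Longrightarrow> phiM n (real k - 1/2, 0) = (real k - 1/2, 0)"
  by (auto simp: phiM_def fdom_def)
lemma P2M: "n \<ge> 1 \<Longrightarrow> 0 \<le> x \<Longrightarrow> x \<le> real n \<Longrightarrow> 0 < z \<Longrightarrow> phiM n (x,0) = (z,0) \<Longrightarrow> x = z"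
  by (auto simp: phiM_def fdom_def split: if_splits)
lemma P3M: "snd (phiM n (x,0)) \<noteq> 1/2"
  by (auto simp: phiM_def fdom_def split: if_splits)
lemma P4M: "m \<le> n \<Longrightarrow> snd (phiM n (real m, 1/2)) = 1/2"
  by (auto simp: phiM_def fdom_def split: if_splits)
lemma P5M: "m \<le> n \<Longrightarrow> m' \<le> n \<Longrightarrow> 0 \<le> y \<Longrightarrow> y \<le> 1 \<Longrightarrow>
        phiM n (real m', y) = phiM n (real m, 1/2) \<Longrightarrow> m = m' \<or> (m = 0 \<and> m' = n) \<or> (m = n \<and> m' = 0)"
  by (auto simp: phiM_def fdom_def split: if_splits)

lemma P1K: "n \<ge> 1 \<Longrightarrow> k \<in> {1..n} \<Longrightarrow> phiK n (real k - 1/2, 0) = (real k - 1/2, 0)"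
  by (auto simp: phiK_def fdom_def)
lemma P2K: "n \<ge> 1 \<Longrightarrow> 0 \<le> x \<Longrightarrow> x \<le> real n \<Longrightarrow> 0 < z \<Longrightarrow> phiK n (x,0) = (z,0) \<Longrightarrow> x = z"
  by (auto simp: phiK_def fdom_def split: if_splits)
lemma P3K: "snd (phiK n (x,0)) \<noteq> 1/2"
  by (auto simp: phiK_def fdom_def split: if_splits)
lemma P4K: "m \<le> n \<Longrightarrow> snd (phiK n (real m, 1/2)) = 1/2"
  by (auto simp: phiK_def fdom_def split: if_splits)
lemma P5K: "m \<le> n \<Longrightarrow> m' \<le> n \<Longrightarrow> 0 \<le> y \<Longrightarrow> y \<le> 1 \<Longrightarrow>
        phiK n (real m', y) = phiK n (real m, 1/2) \<Longrightarrow> m = m' \<or> (m = 0 \<and> m' = n) \<or> (m = n \<and> m' = 0)"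
  by (auto simp: phiK_def fdom_def split: if_splits)

lemma P1P: "n \<ge> 1 \<Longrightarrow> k \<in> {1..n} \<Longrightarrow> phiP n (real k - 1/2, 0) = (real k - 1/2, 0)"
  by (auto simp: phiP_def fdom_def)
lemma P2P: "n \<ge> 1 \<Longrightarrow> 0 \<le> x \<Longrightarrow> x \<le> real n \<Longrightarrow> 0 < z \<Longrightarrow> phiP n (x,0) = (z,0) \<Longrightarrow> x = z"
  by (auto simp: phiP_def fdom_def split: if_splits)
lemma P3P: "snd (phiP n (x,0)) \<noteq> 1/2"
  by (auto simp: phiP_def fdom_def split: if_splits)
lemma P4P: "m \<le> n \<Longrightarrow> snd (phiP n (real m, 1/2)) = 1/2"
  by (auto simp: phiP_def fdom_def split: if_splits)
lemma P5P: "m \<le> n \<Longrightarrow> m' \<le> n \<Longrightarrow> 0 \<le> y \<Longrightarrow> y \<le> 1 \<Longrightarrow>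
        phiP n (real m', y) = phiP n (real m, 1/2) \<Longrightarrow> m = m' \<or> (m = 0 \<and> m' = n) \<or> (m = n \<and> m' = 0)"
  by (auto simp: phiP_def fdom_def split: if_splits)

lemma mob_sub_K: "mob_gen n p q \<Longrightarrow> klein_gen n p q" by (simp add: klein_gen_def)
lemma mob_sub_P: "mob_gen n p q \<Longrightarrow> proj_gen n p q" by (simp add: proj_gen_def)

definition adjC :: "nat \<Rightarrow> nat \<Rightarrow> nat \<Rightarrow> bool" where
  "adjC n i j \<longleftrightarrow> i \<noteq> j \<and> i \<in> {1..n} \<and> j \<in> {1..n} \<and> (j = i+1 \<or> i = j+1 \<or> i+j = n+1)"

lemma adjM: assumes n1: "n \<ge> 1" shows "adjacent (mob_gen n) n i j \<longleftrightarrow> adjC n i j"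
  unfolding adjC_def
proof (rule adj_gen[OF n1])
  show "\<And>e f. cls (mob_gen n) ` e = cls (mob_gen n) ` f \<longleftrightarrow> phiM n ` e = phiM n ` f"
    by (rule img_phi[OF respM toM])
  show "\<And>j. j \<in> {1..n} \<Longrightarrow> phiM n ` edgeT j = phiM n ` edgeB (n+1-j)"
  proof -
    have mg: "\<And>p q. mob_gen n p q \<Longrightarrow> mob_gen n p q" by simp
    show "\<And>j. j \<in> {1..n} \<Longrightarrow> phiM n ` edgeT j = phiM n ` edgeB (n+1-j)" by (rule top_gen[OF respM mg])
  qed
  show "\<And>k k'. k \<in> {1..n} \<Longrightarrow> k' \<in> {1..n} \<Longrightarrow> phiM n ` edgeB k = phiM n ` edgeB k' \<Longrightarrow> k = k'"
    by (rule hinj_gen[OF P1M[OF n1] P2M[OF n1]])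
  show "\<And>k m. k \<in> {1..n} \<Longrightarrow> m \<le> n \<Longrightarrow> phiM n ` edgeB k \<noteq> phiM n ` edgeV m"
    by (rule hv_gen[OF P3M P4M])
  show "\<And>m m'. m \<le> n \<Longrightarrow> m' \<le> n \<Longrightarrow> phiM n ` edgeV m = phiM n ` edgeV m' \<Longrightarrow>
                 m = m' \<or> (m = 0 \<and> m' = n) \<or> (m = n \<and> m' = 0)"
    by (rule vinj_gen[OF P5M])
qed

lemma adjK: assumes n1: "n \<ge> 1" shows "adjacent (klein_gen n) n i j \<longleftrightarrow> adjC n i j"
  unfolding adjC_def
proof (rule adj_gen[OF n1])
  show "\<And>e f. cls (klein_gen n) ` e = cls (klein_gen n) ` f \<longleftrightarrow> phiK n ` e = phiK n ` f"
    by (rule img_phi[OF respK[OF n1] toK[OF n1]])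
  show "\<And>j. j \<in> {1..n} \<Longrightarrow> phiK n ` edgeT j = phiK n ` edgeB (n+1-j)"
    by (rule top_gen[OF respK[OF n1] mob_sub_K])
  show "\<And>k k'. k \<in> {1..n} \<Longrightarrow> k' \<in> {1..n} \<Longrightarrow> phiK n ` edgeB k = phiK n ` edgeB k' \<Longrightarrow> k = k'"
    by (rule hinj_gen[OF P1K[OF n1] P2K[OF n1]])
  show "\<And>k m. k \<in> {1..n} \<Longrightarrow> m \<le> n \<Longrightarrow> phiK n ` edgeB k \<noteq> phiK n ` edgeV m"
    by (rule hv_gen[OF P3K P4K])
  show "\<And>m m'. m \<le> n \<Longrightarrow> m' \<le> n \<Longrightarrow> phiK n ` edgeV m = phiK n ` edgeV m' \<Longrightarrow>
                 m = m' \<or> (m = 0 \<and> m' = n) \<or> (m = n \<and> m' = 0)"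
    by (rule vinj_gen[OF P5K])
qed

lemma adjP: assumes n1: "n \<ge> 1" shows "adjacent (proj_gen n) n i j \<longleftrightarrow> adjC n i j"
  unfolding adjC_def
proof (rule adj_gen[OF n1])
  show "\<And>e f. cls (proj_gen n) ` e = cls (proj_gen n) ` f \<longleftrightarrow> phiP n ` e = phiP n ` f"
    by (rule img_phi[OF respP[OF n1] toP[OF n1]])
  show "\<And>j. j \<in> {1..n} \<Longrightarrow> phiP n ` edgeT j = phiP n ` edgeB (n+1-j)"
    by (rule top_gen[OF respP[OF n1] mob_sub_P])
  show "\<And>k k'. k \<in> {1..n} \<Longrightarrow> k' \<in> {1..n} \<Longrightarrow> phiP n ` edgeB k = phiP n ` edgeB k' \<Longrightarrow> k = k'"
    by (rule hinj_gen[OF P1P[OF n1] P2P[OF n1]])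
  show "\<And>k m. k \<in> {1..n} \<Longrightarrow> m \<le> n \<Longrightarrow> phiP n ` edgeB k \<noteq> phiP n ` edgeV m"
    by (rule hv_gen[OF P3P P4P])
  show "\<And>m m'. m \<le> n \<Longrightarrow> m' \<le> n \<Longrightarrow> phiP n ` edgeV m = phiP n ` edgeV m' \<Longrightarrow>
                 m = m' \<or> (m = 0 \<and> m' = n) \<or> (m = n \<and> m' = 0)"
    by (rule vinj_gen[OF P5P])
qed

lemma N1_cong: "(\<And>i j. adjacent G n i j \<longleftrightarrow> adjacent G' n i j) \<Longrightarrow> N1 G n W \<longleftrightarrow> N1 G' n W"
  unfolding N1_def by simp

definition hc :: "(pt \<Rightarrow> pt) \<Rightarrow> pt \<Rightarrow> nat \<Rightarrow> bool" where
  "hc \<phi> c j \<longleftrightarrow> (\<exists>c'\<in>sq_corners j. \<phi> c' = \<phi> c)"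

lemma N2_alt:
  assumes resp: "\<And>p q. G p q \<Longrightarrow> \<phi> p = \<phi> q" and to: "\<And>p. ident G p (\<phi> p)"
  shows "N2box G B n W \<longleftrightarrow> (\<forall>j\<in>{1..n}. \<forall>c\<in>sq_corners j.
     \<not> ({q. \<phi> q = \<phi> c} \<inter> B = {} \<and> card {j'\<in>{1..n}. hc \<phi> c j'} = 4 \<and> (\<forall>j'\<in>{1..n}. hc \<phi> c j' \<longrightarrow> j' \<in> W)))"
proof -
  define Q where "Q v \<longleftrightarrow> (v \<inter> B = {} \<and> sq_degree G n v = 4 \<longrightarrow>
       \<not> (\<forall>j\<in>{1..n}. has_corner G v j \<longrightarrow> j \<in> W))" for v
  have 1: "N2box G B n W \<longleftrightarrow> (\<forall>j\<in>{1..n}. \<forall>c\<in>sq_corners j. Q (cls G c))"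
    unfolding N2box_def vertices_def Q_def by blast
  have h: "\<And>c j'. has_corner G (cls G c) j' \<longleftrightarrow> hc \<phi> c j'"
  proof -
    fix c j'
    have "\<And>c'. cls G c' = cls G c \<longleftrightarrow> \<phi> c' = \<phi> c" by (rule cls_eq_phi[OF resp to])
    then show "has_corner G (cls G c) j' \<longleftrightarrow> hc \<phi> c j'" unfolding has_corner_def hc_def by simp
  qed
  have 2: "\<And>c. Q (cls G c) \<longleftrightarrow>
     \<not> ({q. \<phi> q = \<phi> c} \<inter> B = {} \<and> card {j'\<in>{1..n}. hc \<phi> c j'} = 4 \<and> (\<forall>j'\<in>{1..n}. hc \<phi> c j' \<longrightarrow> j' \<in> W))"
  proof -
    fix c
    have c: "cls G c = {q. \<phi> q = \<phi> c}" by (rule cls_phi[OF resp to])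
    show "?thesis c" unfolding Q_def sq_degree_def h unfolding c by auto
  qed
  show ?thesis unfolding 1 2 ..
qed

lemma corner_fdom: "j \<in> {1..n} \<Longrightarrow> c \<in> sq_corners j \<Longrightarrow> c \<in> fdom n"
  by (auto simp: sq_corners_def fdom_def)

lemma corner_fst: "c \<in> sq_corners j \<Longrightarrow> fst c = real j - 1 \<or> fst c = real j"
  by (auto simp: sq_corners_def)




lemma eqKM: "p \<in> fdom n \<Longrightarrow> 0 < fst p \<Longrightarrow> fst p < real n \<Longrightarrow> phiK n p = phiM n p"
  by (simp add: phiK_def phiM_def)
lemma eqPM: "p \<in> fdom n \<Longrightarrow> 0 < fst p \<Longrightarrow> fst p < real n \<Longrightarrow> phiP n p = phiM n p"
  by (simp add: phiP_def phiM_def)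
lemma fstM_int: "p \<in> fdom n \<Longrightarrow> 0 < fst p \<Longrightarrow> fst p < real n \<Longrightarrow> 0 < fst (phiM n p) \<and> fst (phiM n p) < real n"
  by (simp add: phiM_def)
lemma fstM_bnd: "p \<in> fdom n \<Longrightarrow> fst p = 0 \<or> fst p = real n \<Longrightarrow> fst (phiM n p) = 0 \<or> fst (phiM n p) = real n"
  by (auto simp add: phiM_def)
lemma fstK_bnd: "p \<in> fdom n \<Longrightarrow> fst p = 0 \<or> fst p = real n \<Longrightarrow> fst (phiK n p) = 0"
  by (auto simp add: phiK_def)
lemma fstP_bnd: "n \<ge> 1 \<Longrightarrow> p \<in> fdom n \<Longrightarrow> fst p = 0 \<or> fst p = real n \<Longrightarrow> fst (phiP n p) = 0"
  by (auto simp add: phiP_def)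
lemma fdom_fst: "p \<in> fdom n \<Longrightarrow> (0 < fst p \<and> fst p < real n) \<or> fst p = 0 \<or> fst p = real n"
  by (auto simp: fdom_def)

lemma agreeK: assumes "p \<in> fdom n" "q \<in> fdom n" "0 < fst q" "fst q < real n"
  shows "phiK n p = phiK n q \<longleftrightarrow> phiM n p = phiM n q"
proof -
  have q: "phiK n q = phiM n q" using eqKM assms by blast
  have qi: "0 < fst (phiM n q)" "fst (phiM n q) < real n" using fstM_int assms by blast+
  show ?thesis
  proof (cases "0 < fst p \<and> fst p < real n")
    case True then show ?thesis using eqKM assms q by metis
  next
    case False
    then have b: "fst p = 0 \<or> fst p = real n" using fdom_fst assms(1) by blast
    show ?thesis using fstK_bnd[OF assms(1) b] fstM_bnd[OF assms(1) b] q qi by auto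
  qed
qed

lemma agreeP: assumes "n \<ge> 1" "p \<in> fdom n" "q \<in> fdom n" "0 < fst q" "fst q < real n"
  shows "phiP n p = phiP n q \<longleftrightarrow> phiM n p = phiM n q"
proof -
  have q: "phiP n q = phiM n q" using eqPM assms by blast
  have qi: "0 < fst (phiM n q)" "fst (phiM n q) < real n" using fstM_int assms by blast+
  show ?thesis
  proof (cases "0 < fst p \<and> fst p < real n")
    case True then show ?thesis using eqPM assms q by metis
  next
    case False
    then have b: "fst p = 0 \<or> fst p = real n" using fdom_fst assms(2) by blast
    show ?thesis using fstP_bnd[OF assms(1,2) b] fstM_bnd[OF assms(2) b] q qi by auto
  qed
qed

lemma intM: assumes "q \<in> fdom n" "0 < fst q" "fst q < real n"
  shows "{p. phiM n p = phiM n q} \<inter> mob_boundary n = {}"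
proof -
  have qi: "0 < fst (phiM n q)" "fst (phiM n q) < real n" using fstM_int assms by blast+
  { fix p assume "p \<in> mob_boundary n" "phiM n p = phiM n q"
    then have False using fstM_bnd[of p n] qi unfolding mob_boundary_def by auto }
  then show ?thesis by blast
qed

lemma bndK: assumes "p \<in> fdom n" "q \<in> fdom n" "fst q = 0 \<or> fst q = real n" "phiK n p = phiK n q"
  shows "fst p = 0 \<or> fst p = real n"
proof (rule ccontr)
  assume "\<not> ?thesis"
  then have i: "0 < fst p" "fst p < real n" using fdom_fst assms(1) by blast+
  then show False using eqKM[OF assms(1) i] fstM_int[OF assms(1) i] fstK_bnd[OF assms(2,3)] assms(4) by simp
qed

lemma bndP: assumes "n \<ge> 1" "p \<in> fdom n" "q \<in> fdom n" "fst q = 0 \<or> fst q = real n" "phiP n p = phiP n q"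
  shows "fst p = 0 \<or> fst p = real n"
proof (rule ccontr)
  assume "\<not> ?thesis"
  then have i: "0 < fst p" "fst p < real n" using fdom_fst assms(2) by blast+
  then show False using eqPM[OF assms(2) i] fstM_int[OF assms(2) i] fstP_bnd[OF assms(1,3,4)] assms(5) by simp
qed



lemma corner_bnd: assumes j': "j' \<in> {1..n}" and c': "c' \<in> sq_corners j'" and b: "fst c' = 0 \<or> fst c' = real n"
  shows "j' \<in> {1, n}"
proof -
  have f: "fst c' = real j' - 1 \<or> fst c' = real j'" using corner_fst c' by blast
  have jn: "real j' \<le> real n" "1 \<le> real j'" using j' by auto
  have "real j' = 1 \<or> real j' = real n"
    using f b jn by linarith
  then have "j' = 1 \<or> j' = n" by (metis of_nat_1 of_nat_eq_iff)
  then show ?thesis by blast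
qed

lemma N2_gen:
  assumes n1: "n \<ge> 1"
    and respG: "\<And>p q. G p q \<Longrightarrow> \<psi> p = \<psi> q" and toG: "\<And>p. ident G p (\<psi> p)"
    and agree: "\<And>p q. p \<in> fdom n \<Longrightarrow> q \<in> fdom n \<Longrightarrow> 0 < fst q \<Longrightarrow> fst q < real n \<Longrightarrow>
       \<psi> p = \<psi> q \<longleftrightarrow> phiM n p = phiM n q"
    and bnd: "\<And>p q. p \<in> fdom n \<Longrightarrow> q \<in> fdom n \<Longrightarrow> fst q = 0 \<or> fst q = real n \<Longrightarrow>
       \<psi> p = \<psi> q \<Longrightarrow> fst p = 0 \<or> fst p = real n"
  shows "N2box (mob_gen n) (mob_boundary n) n W \<longleftrightarrow> N2box G {} n W"
proof -
  have eq: "\<not> ({q. phiM n q = phiM n c} \<inter> mob_boundary n = {} \<and> card {j'\<in>{1..n}. hc (phiM n) c j'} = 4 \<and> (\<forall>j'\<in>{1..n}. hc (phiM n) c j' \<longrightarrow> j' \<in> W))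
      \<longleftrightarrow> \<not> ({q. \<psi> q = \<psi> c} \<inter> {} = {} \<and> card {j'\<in>{1..n}. hc \<psi> c j'} = 4 \<and> (\<forall>j'\<in>{1..n}. hc \<psi> c j' \<longrightarrow> j' \<in> W))"
    if j: "j \<in> {1..n}" and c: "c \<in> sq_corners j" for j c
  proof -
    have cf: "c \<in> fdom n" using corner_fdom j c by blast
    show ?thesis
    proof (cases "0 < fst c \<and> fst c < real n")
      case True
      have "hc \<psi> c j' \<longleftrightarrow> hc (phiM n) c j'" if "j' \<in> {1..n}" for j'
      proof -
        have "\<And>c'. c' \<in> sq_corners j' \<Longrightarrow> \<psi> c' = \<psi> c \<longleftrightarrow> phiM n c' = phiM n c"
          using agree[OF _ cf] True corner_fdom[OF that] by blast
        then show ?thesis unfolding hc_def by auto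
      qed
      then have s: "{j'\<in>{1..n}. hc \<psi> c j'} = {j'\<in>{1..n}. hc (phiM n) c j'}" by blast
      have "{q. phiM n q = phiM n c} \<inter> mob_boundary n = {}" using intM cf True by blast
      then show ?thesis unfolding s using \<open>\<And>j'. j' \<in> {1..n} \<Longrightarrow> hc \<psi> c j' = hc (phiM n) c j'\<close> by auto
    next
      case False
      then have b: "fst c = 0 \<or> fst c = real n" using fdom_fst cf by blast
      then have "c \<in> mob_boundary n" using cf by (simp add: mob_boundary_def)
      then have L: "{q. phiM n q = phiM n c} \<inter> mob_boundary n \<noteq> {}" by blast
      have "{j'\<in>{1..n}. hc \<psi> c j'} \<subseteq> {1, n}"
      proof
        fix j' assume "j' \<in> {j'\<in>{1..n}. hc \<psi> c j'}"
        then obtain c' where j': "j' \<in> {1..n}" and c': "c' \<in> sq_corners j'" "\<psi> c' = \<psi> c"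
          unfolding hc_def by blast
        have "fst c' = 0 \<or> fst c' = real n" using bnd[OF corner_fdom[OF j' c'(1)] cf b c'(2)] .
        then show "j' \<in> {1, n}" using corner_bnd j' c'(1) by blast
      qed
      then have "card {j'\<in>{1..n}. hc \<psi> c j'} \<le> card {1, n}" by (intro card_mono) auto
      also have "\<dots> \<le> 2" by (simp add: card_insert_le_m1)
      finally show ?thesis using L by auto
    qed
  qed
  show ?thesis
  proof -
    have m: "\<And>p q. mob_gen n p q \<Longrightarrow> phiM n p = phiM n q" by (rule respM)
    have t: "\<And>p. ident (mob_gen n) p (phiM n p)" by (rule toM)
    have A: "N2box (mob_gen n) (mob_boundary n) n W \<longleftrightarrow> (\<forall>j\<in>{1..n}. \<forall>c\<in>sq_corners j.
     \<not> ({q. phiM n q = phiM n c} \<inter> mob_boundary n = {} \<and> card {j'\<in>{1..n}. hc (phiM n) c j'} = 4 \<and> (\<forall>j'\<in>{1..n}. hc (phiM n) c j' \<longrightarrow> j' \<in> W)))"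
      by (rule N2_alt[OF m t])
    have B: "N2box G {} n W \<longleftrightarrow> (\<forall>j\<in>{1..n}. \<forall>c\<in>sq_corners j.
     \<not> ({q. \<psi> q = \<psi> c} \<inter> {} = {} \<and> card {j'\<in>{1..n}. hc \<psi> c j'} = 4 \<and> (\<forall>j'\<in>{1..n}. hc \<psi> c j' \<longrightarrow> j' \<in> W)))"
      by (rule N2_alt[OF respG toG])
    have C: "(\<forall>j\<in>{1..n}. \<forall>c\<in>sq_corners j.
     \<not> ({q. phiM n q = phiM n c} \<inter> mob_boundary n = {} \<and> card {j'\<in>{1..n}. hc (phiM n) c j'} = 4 \<and> (\<forall>j'\<in>{1..n}. hc (phiM n) c j' \<longrightarrow> j' \<in> W)))
      \<longleftrightarrow> (\<forall>j\<in>{1..n}. \<forall>c\<in>sq_corners j.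
     \<not> ({q. \<psi> q = \<psi> c} \<inter> {} = {} \<and> card {j'\<in>{1..n}. hc \<psi> c j'} = 4 \<and> (\<forall>j'\<in>{1..n}. hc \<psi> c j' \<longrightarrow> j' \<in> W)))"
      by (intro ball_cong[OF refl]) (rule eq)
    show ?thesis using trans[OF A trans[OF C B[symmetric]]] .
  qed
qed



theorem lemma4p1:
  fixes n :: nat
  assumes "n \<ge> 1"
  shows "M_box n = K_box n \<and> K_box n = P_box n \<and>
         (\<forall>W \<subseteq> {1..n}. (valid_M n W \<longleftrightarrow> valid_K n W) \<and> (valid_K n W \<longleftrightarrow> valid_P n W))"
proof -
  note n1 = assms
  have MK: "valid_M n W \<longleftrightarrow> valid_K n W" for W
  proof -
    have "N1 (mob_gen n) n W \<longleftrightarrow> N1 (klein_gen n) n W"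
      by (rule N1_cong) (simp add: adjM[OF n1] adjK[OF n1])
    moreover have "N2box (mob_gen n) (mob_boundary n) n W \<longleftrightarrow> N2box (klein_gen n) {} n W"
      by (rule N2_gen[OF n1 respK[OF n1] toK[OF n1] agreeK bndK])
    ultimately show ?thesis unfolding valid_M_def valid_K_def valid_def by blast
  qed
  have KP: "valid_K n W \<longleftrightarrow> valid_P n W" for W
  proof -
    have "N1 (proj_gen n) n W \<longleftrightarrow> N1 (klein_gen n) n W"
      by (rule N1_cong) (simp add: adjP[OF n1] adjK[OF n1])
    moreover have "N2box (mob_gen n) (mob_boundary n) n W \<longleftrightarrow> N2box (proj_gen n) {} n W"
      by (rule N2_gen[OF n1 respP[OF n1] toP[OF n1] agreeP[OF n1] bndP[OF n1]])
    moreover have "N2box (mob_gen n) (mob_boundary n) n W \<longleftrightarrow> N2box (klein_gen n) {} n W"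
      by (rule N2_gen[OF n1 respK[OF n1] toK[OF n1] agreeK bndK])
    ultimately show ?thesis unfolding valid_M_def valid_K_def valid_P_def valid_def by blast
  qed
  have "M_box n = K_box n" unfolding M_box_def K_box_def using MK by (metis (no_types, lifting) Collect_cong)
  moreover have "K_box n = P_box n" unfolding P_box_def K_box_def using KP by (metis (no_types, lifting) Collect_cong)
  ultimately show ?thesis using MK KP by blast
qed

end
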